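(* Let $G$ be a graph on $n\ge1$ vertices. Then $D(G,k)$, as a function of the positive integer $k$, is given by a polynomial in $k$ (with rational coefficients) of degree $n$ and with constant term $0$. If $G$ has no non-trivial automorphisms, then $D(G,k)=k^n$; otherwise, the sum of the coefficients of this polynomial is $0$.
   Context: A $k$-labeling of $G$ is a map $\phi:V(G)\to\{1,\dots,k\}$; an automorphism $\pi$ preserves $\phi$ if $\phi(\pi(v))=\phi(v)$ for all $v$; $\phi$ is distinguishing if only the identity preserves it. Two distinguishing $k$-labelings $\phi,\phi'$ are equivalent if some automorphism $\pi$ satisfies $\phi'(\pi(v))=\phi(v)$ for all $v$; $D(G,k)$ is the number of equivalence classes of distinguishing $k$-labelings of $G$. *)

theory Defs
  imports "HOL-Combinatorics.Permutations" "HOL-Library.FuncSet"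
          "HOL-Computational_Algebra.Polynomial"
begin

definition simple_graph :: "'a set \<Rightarrow> ('a \<Rightarrow> 'a \<Rightarrow> bool) \<Rightarrow> bool" where
  "simple_graph V E \<longleftrightarrow> finite V \<and> (\<forall>u v. E u v \<longrightarrow> u \<in> V \<and> v \<in> V)
     \<and> (\<forall>u v. E u v \<longrightarrow> E v u) \<and> (\<forall>v. \<not> E v v)"

definition graph_aut :: "'a set \<Rightarrow> ('a \<Rightarrow> 'a \<Rightarrow> bool) \<Rightarrow> ('a \<Rightarrow> 'a) set" where
  "graph_aut V E = {\<pi>. \<pi> permutes V \<and> (\<forall>u\<in>V. \<forall>v\<in>V. E u v \<longleftrightarrow> E (\<pi> u) (\<pi> v))}"

definition labelings :: "'a set \<Rightarrow> nat \<Rightarrow> ('a \<Rightarrow> nat) set" where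
  "labelings V k = V \<rightarrow>\<^sub>E {1..k}"

definition preserves :: "'a set \<Rightarrow> ('a \<Rightarrow> 'a) \<Rightarrow> ('a \<Rightarrow> nat) \<Rightarrow> bool" where
  "preserves V \<pi> \<phi> \<longleftrightarrow> (\<forall>v\<in>V. \<phi> (\<pi> v) = \<phi> v)"

definition distinguishing :: "'a set \<Rightarrow> ('a \<Rightarrow> 'a \<Rightarrow> bool) \<Rightarrow> ('a \<Rightarrow> nat) \<Rightarrow> bool" where
  "distinguishing V E \<phi> \<longleftrightarrow> (\<forall>\<pi>\<in>graph_aut V E. preserves V \<pi> \<phi> \<longrightarrow> \<pi> = id)"

definition dist_labelings :: "'a set \<Rightarrow> ('a \<Rightarrow> 'a \<Rightarrow> bool) \<Rightarrow> nat \<Rightarrow> ('a \<Rightarrow> nat) set" where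
  "dist_labelings V E k = {\<phi> \<in> labelings V k. distinguishing V E \<phi>}"

definition label_equiv :: "'a set \<Rightarrow> ('a \<Rightarrow> 'a \<Rightarrow> bool) \<Rightarrow> nat \<Rightarrow> (('a \<Rightarrow> nat) \<times> ('a \<Rightarrow> nat)) set" where
  "label_equiv V E k = {(\<phi>, \<phi>'). \<phi> \<in> dist_labelings V E k \<and> \<phi>' \<in> dist_labelings V E k \<and>
      (\<exists>\<pi>\<in>graph_aut V E. \<forall>v\<in>V. \<phi>' (\<pi> v) = \<phi> v)}"

definition D :: "'a set \<Rightarrow> ('a \<Rightarrow> 'a \<Rightarrow> bool) \<Rightarrow> nat \<Rightarrow> nat" where
  "D V E k = card (dist_labelings V E k // label_equiv V E k)"

end

theory Submission
  imports Defs
begin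

context
  fixes V :: "'a set" and E :: "'a \<Rightarrow> 'a \<Rightarrow> bool"
  assumes G: "simple_graph V E"
begin

lemma finV: "finite V" using G by (simp add: simple_graph_def)

lemma aut_id: "id \<in> graph_aut V E"
  by (simp add: graph_aut_def permutes_id)

lemma aut_perm: "\<pi> \<in> graph_aut V E \<Longrightarrow> \<pi> permutes V"
  by (simp add: graph_aut_def)

lemma aut_D:
  assumes "\<sigma> \<in> graph_aut V E"
  shows "\<sigma> permutes V" and "\<And>u v. u \<in> V \<Longrightarrow> v \<in> V \<Longrightarrow> E u v = E (\<sigma> u) (\<sigma> v)"
proof -
  have s': "\<sigma> permutes V \<and> (\<forall>u\<in>V. \<forall>v\<in>V. E u v = E (\<sigma> u) (\<sigma> v))"
    using assms unfolding graph_aut_def by (rule CollectD)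
  then show "\<sigma> permutes V" by (rule conjunct1)
  fix u v assume "u \<in> V" "v \<in> V"
  note uv = this
  have "\<forall>v\<in>V. E u v = E (\<sigma> u) (\<sigma> v)" using conjunct2[OF s'] uv(1) by (rule bspec)
  then show "E u v = E (\<sigma> u) (\<sigma> v)" using uv(2) by (rule bspec)
qed

lemma aut_I:
  assumes "\<sigma> permutes V" and "\<And>u v. u \<in> V \<Longrightarrow> v \<in> V \<Longrightarrow> E u v = E (\<sigma> u) (\<sigma> v)"
  shows "\<sigma> \<in> graph_aut V E"
  unfolding graph_aut_def using assms by (intro CollectI conjI ballI)

lemma aut_comp: "\<sigma> \<in> graph_aut V E \<Longrightarrow> \<tau> \<in> graph_aut V E \<Longrightarrow> \<sigma> \<circ> \<tau> \<in> graph_aut V E"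
proof -
  assume s: "\<sigma> \<in> graph_aut V E" and t: "\<tau> \<in> graph_aut V E"
  note ps = aut_D(1)[OF s] and pt = aut_D(1)[OF t]
  show ?thesis
  proof (rule aut_I[OF permutes_compose[OF pt ps]])
    fix u v assume uv: "u \<in> V" "v \<in> V"
    have tu: "\<tau> u \<in> V" "\<tau> v \<in> V" using uv by (simp_all add: permutes_in_image[OF pt])
    have "E u v = E (\<tau> u) (\<tau> v)" by (rule aut_D(2)[OF t uv])
    also have "\<dots> = E (\<sigma> (\<tau> u)) (\<sigma> (\<tau> v))" by (rule aut_D(2)[OF s tu])
    finally show "E u v = E ((\<sigma> \<circ> \<tau>) u) ((\<sigma> \<circ> \<tau>) v)" by simp
  qed
qed

lemma aut_inv: "\<sigma> \<in> graph_aut V E \<Longrightarrow> inv \<sigma> \<in> graph_aut V E"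
proof -
  assume s: "\<sigma> \<in> graph_aut V E"
  note p = aut_D(1)[OF s]
  show ?thesis
  proof (rule aut_I[OF permutes_inv[OF p]])
    fix u v assume uv: "u \<in> V" "v \<in> V"
    have iv: "inv \<sigma> u \<in> V" "inv \<sigma> v \<in> V" using uv by (simp_all add: permutes_in_image[OF permutes_inv[OF p]])
    have "E (inv \<sigma> u) (inv \<sigma> v) = E (\<sigma> (inv \<sigma> u)) (\<sigma> (inv \<sigma> v))" by (rule aut_D(2)[OF s iv])
    also have "\<dots> = E u v" by (simp add: permutes_inverses(1)[OF p])
    finally show "E u v = E (inv \<sigma> u) (inv \<sigma> v)" by simp
  qed
qed

lemma fin_aut: "finite (graph_aut V E)"
  by (rule finite_subset[OF _ finite_permutations[OF finV]]) (auto simp: graph_aut_def)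

lemma aut_inv_in: "\<pi> \<in> graph_aut V E \<Longrightarrow> v \<in> V \<Longrightarrow> inv \<pi> v \<in> V"
  by (simp add: permutes_in_image[OF permutes_inv[OF aut_perm]])

lemma aut_in: "\<pi> \<in> graph_aut V E \<Longrightarrow> v \<in> V \<Longrightarrow> \<pi> v \<in> V"
  by (simp add: permutes_in_image[OF aut_perm])

lemma aut_inv1: "\<pi> \<in> graph_aut V E \<Longrightarrow> \<pi> (inv \<pi> x) = x"
  by (simp add: permutes_inverses(1)[OF aut_perm])

lemma aut_inv2: "\<pi> \<in> graph_aut V E \<Longrightarrow> inv \<pi> (\<pi> x) = x"
  by (simp add: permutes_inverses(2)[OF aut_perm])

lemma fin_dist: "finite (dist_labelings V E k)"
  by (rule finite_subset[of _ "labelings V k"]) (auto simp: dist_labelings_def labelings_def finV finite_PiE)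

lemma transl_dist:
  assumes phi: "\<phi> \<in> dist_labelings V E k" and pi: "\<pi> \<in> graph_aut V E"
  shows "restrict (\<lambda>v. \<phi> (inv \<pi> v)) V \<in> dist_labelings V E k"
proof -
  let ?psi = "restrict (\<lambda>v. \<phi> (inv \<pi> v)) V"
  have L: "\<phi> \<in> V \<rightarrow>\<^sub>E {1..k}" and dis: "distinguishing V E \<phi>"
    using phi by (auto simp: dist_labelings_def labelings_def)
  have "?psi \<in> V \<rightarrow>\<^sub>E {1..k}" using L aut_inv_in[OF pi] by auto
  moreover have "distinguishing V E ?psi"
    unfolding distinguishing_def
  proof (intro ballI impI)
    fix \<sigma> assume s: "\<sigma> \<in> graph_aut V E" and pr: "preserves V \<sigma> ?psi"
    let ?t = "inv \<pi> \<circ> \<sigma> \<circ> \<pi>"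
    have t: "?t \<in> graph_aut V E" using aut_comp aut_inv pi s by metis
    have "preserves V ?t \<phi>"
      unfolding preserves_def
    proof
      fix v assume v: "v \<in> V"
      have "\<phi> (?t v) = ?psi (\<sigma> (\<pi> v))" using aut_in[OF s aut_in[OF pi v]] by simp
      also have "\<dots> = ?psi (\<pi> v)" using pr aut_in[OF pi v] by (simp add: preserves_def)
      also have "\<dots> = \<phi> v" using aut_in[OF pi v] aut_inv2[OF pi] by simp
      finally show "\<phi> (?t v) = \<phi> v" .
    qed
    then have tid: "?t = id" using dis t by (simp add: distinguishing_def)
    show "\<sigma> = id"
    proof
      fix x
      have "?t (inv \<pi> x) = inv \<pi> x" using tid by simp
      then have "inv \<pi> (\<sigma> x) = inv \<pi> x" using aut_inv1[OF pi] by simp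
      then have "\<pi> (inv \<pi> (\<sigma> x)) = \<pi> (inv \<pi> x)" by simp
      then show "\<sigma> x = id x" using aut_inv1[OF pi] by simp
    qed
  qed
  ultimately show ?thesis by (simp add: dist_labelings_def labelings_def)
qed

lemma equiv_r: "equiv (dist_labelings V E k) (label_equiv V E k)"
proof (rule equivI)
  show "label_equiv V E k \<subseteq> dist_labelings V E k \<times> dist_labelings V E k"
    by (auto simp: label_equiv_def)
  show "refl_on (dist_labelings V E k) (label_equiv V E k)"
    unfolding refl_on_def label_equiv_def by (auto intro!: bexI[of _ id] aut_id)
  show "sym (label_equiv V E k)"
  proof (rule symI)
    fix \<phi> \<phi>' assume "(\<phi>, \<phi>') \<in> label_equiv V E k"
    then obtain \<pi> where d: "\<phi> \<in> dist_labelings V E k" "\<phi>' \<in> dist_labelings V E k"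
      and pi: "\<pi> \<in> graph_aut V E" and h: "\<forall>v\<in>V. \<phi>' (\<pi> v) = \<phi> v"
      unfolding label_equiv_def by blast
    have h': "\<forall>v\<in>V. \<phi> (inv \<pi> v) = \<phi>' v"
    proof
      fix v assume v: "v \<in> V"
      have "\<phi>' (\<pi> (inv \<pi> v)) = \<phi> (inv \<pi> v)" using h aut_inv_in[OF pi v] by blast
      then show "\<phi> (inv \<pi> v) = \<phi>' v" using aut_inv1[OF pi] by simp
    qed
    show "(\<phi>', \<phi>) \<in> label_equiv V E k"
      unfolding label_equiv_def using d aut_inv[OF pi] h' by blast
  qed
  show "trans (label_equiv V E k)"
  proof (rule transI)
    fix \<phi> \<phi>' \<phi>'' assume "(\<phi>, \<phi>') \<in> label_equiv V E k" "(\<phi>', \<phi>'') \<in> label_equiv V E k"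
    then obtain \<pi> \<sigma> where d: "\<phi> \<in> dist_labelings V E k" "\<phi>'' \<in> dist_labelings V E k"
      and pi: "\<pi> \<in> graph_aut V E" and h: "\<forall>v\<in>V. \<phi>' (\<pi> v) = \<phi> v"
      and s: "\<sigma> \<in> graph_aut V E" and h2: "\<forall>v\<in>V. \<phi>'' (\<sigma> v) = \<phi>' v"
      unfolding label_equiv_def by blast
    have h': "\<forall>v\<in>V. \<phi>'' ((\<sigma> \<circ> \<pi>) v) = \<phi> v"
      using h h2 aut_in[OF pi] by simp
    show "(\<phi>, \<phi>'') \<in> label_equiv V E k"
      unfolding label_equiv_def using d aut_comp[OF s pi] h' by blast
  qed
qed

lemma class_card:
  assumes phi: "\<phi> \<in> dist_labelings V E k"
  shows "card (label_equiv V E k `` {\<phi>}) = card (graph_aut V E)"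
proof -
  define g where "g \<pi> = restrict (\<lambda>v. \<phi> (inv \<pi> v)) V" for \<pi>
  have L: "\<phi> \<in> V \<rightarrow>\<^sub>E {1..k}" and dis: "distinguishing V E \<phi>"
    using phi by (auto simp: dist_labelings_def labelings_def)
  have "label_equiv V E k `` {\<phi>} = g ` graph_aut V E"
  proof
    show "label_equiv V E k `` {\<phi>} \<subseteq> g ` graph_aut V E"
    proof
      fix \<phi>' assume "\<phi>' \<in> label_equiv V E k `` {\<phi>}"
      then obtain \<pi> where pi: "\<pi> \<in> graph_aut V E" and h: "\<forall>v\<in>V. \<phi>' (\<pi> v) = \<phi> v"
        and d: "\<phi>' \<in> dist_labelings V E k"
        unfolding label_equiv_def by blast
      have L': "\<phi>' \<in> V \<rightarrow>\<^sub>E {1..k}" using d by (auto simp: dist_labelings_def labelings_def)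
      have "\<phi>' = g \<pi>"
      proof (rule ext)
        fix v show "\<phi>' v = g \<pi> v"
        proof (cases "v \<in> V")
          case True
          have "\<phi>' (\<pi> (inv \<pi> v)) = \<phi> (inv \<pi> v)" using bspec[OF h aut_inv_in[OF pi True]] .
          then have "\<phi>' v = \<phi> (inv \<pi> v)" by (simp only: aut_inv1[OF pi])
          then show ?thesis using True by (simp add: g_def)
        next
          case False
          have "\<phi>' v = undefined" by (rule PiE_arb[OF L' False])
          then show ?thesis using False by (simp add: g_def)
        qed
      qed
      then show "\<phi>' \<in> g ` graph_aut V E" using pi by blast
    qed
    show "g ` graph_aut V E \<subseteq> label_equiv V E k `` {\<phi>}"
    proof
      fix \<psi> assume "\<psi> \<in> g ` graph_aut V E"
      then obtain \<pi> where pi: "\<pi> \<in> graph_aut V E" and psi: "\<psi> = g \<pi>" by blast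
      have "g \<pi> \<in> dist_labelings V E k" unfolding g_def by (rule transl_dist[OF phi pi])
      moreover have "\<forall>v\<in>V. g \<pi> (\<pi> v) = \<phi> v" using aut_in[OF pi] aut_inv2[OF pi] by (simp add: g_def)
      ultimately have "(\<phi>, g \<pi>) \<in> label_equiv V E k" using phi pi unfolding label_equiv_def by blast
      then show "\<psi> \<in> label_equiv V E k `` {\<phi>}" using psi by blast
    qed
  qed
  moreover have "inj_on g (graph_aut V E)"
  proof (rule inj_onI)
    fix \<pi>1 \<pi>2 assume p1: "\<pi>1 \<in> graph_aut V E" and p2: "\<pi>2 \<in> graph_aut V E" and e: "g \<pi>1 = g \<pi>2"
    let ?t = "inv \<pi>1 \<circ> \<pi>2"
    have t: "?t \<in> graph_aut V E" by (rule aut_comp[OF aut_inv[OF p1] p2])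
    have "preserves V ?t \<phi>"
      unfolding preserves_def
    proof
      fix w assume w: "w \<in> V"
      have "\<phi> (?t w) = g \<pi>1 (\<pi>2 w)" using aut_in[OF p2 w] by (simp add: g_def)
      also have "\<dots> = g \<pi>2 (\<pi>2 w)" using e by simp
      also have "\<dots> = \<phi> w" using aut_in[OF p2 w] aut_inv2[OF p2] by (simp add: g_def)
      finally show "\<phi> (?t w) = \<phi> w" .
    qed
    then have tid: "?t = id" using dis t by (simp add: distinguishing_def)
    show "\<pi>1 = \<pi>2"
    proof
      fix x
      have "inv \<pi>1 (\<pi>2 x) = x" using tid by (metis comp_apply id_apply)
      then have "\<pi>1 (inv \<pi>1 (\<pi>2 x)) = \<pi>1 x" by simp
      then show "\<pi>1 x = \<pi>2 x" using aut_inv1[OF p1] by simp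
    qed
  qed
  ultimately show ?thesis by (simp add: card_image)
qed

lemma orbit_count:
  "card (dist_labelings V E k) = card (dist_labelings V E k // label_equiv V E k) * card (graph_aut V E)"
proof -
  let ?A = "dist_labelings V E k" and ?r = "label_equiv V E k"
  have eq: "equiv ?A ?r" by (rule equiv_r)
  have "card ?A = card (\<Union>(?A // ?r))" using Union_quotient[OF eq] by simp
  also have "\<dots> = sum card (?A // ?r)"
  proof (rule card_Union_disjoint)
    show "pairwise disjnt (?A // ?r)"
      unfolding pairwise_def disjnt_def using quotient_disj[OF eq] by blast
    show "\<And>X. X \<in> ?A // ?r \<Longrightarrow> finite X"
      using in_quotient_imp_subset[OF eq] fin_dist finite_subset by metis
  qed
  also have "\<dots> = sum (\<lambda>_. card (graph_aut V E)) (?A // ?r)"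
  proof (rule sum.cong[OF refl])
    fix X assume "X \<in> ?A // ?r"
    then obtain \<phi> where "\<phi> \<in> ?A" "X = ?r``{\<phi>}" by (rule quotientE)
    then show "card X = card (graph_aut V E)" using class_card by simp
  qed
  finally show ?thesis by simp
qed

end

definition Rel :: "'a set \<Rightarrow> ('a \<Rightarrow> 'a) set \<Rightarrow> ('a \<times> 'a) set" where
  "Rel V B = {(u,v). u \<in> V \<and> v \<in> V \<and>
     (\<forall>\<phi>::'a \<Rightarrow> nat. (\<forall>\<pi>\<in>B. preserves V \<pi> \<phi>) \<longrightarrow> \<phi> u = \<phi> v)}"

lemma Rel_equiv: "equiv V (Rel V B)"
  by (rule equivI) (auto simp: Rel_def refl_on_def sym_def trans_def)

lemma Rel_step: "\<pi> \<in> B \<Longrightarrow> w \<in> V \<Longrightarrow> \<pi> w \<in> V \<Longrightarrow> (w, \<pi> w) \<in> Rel V B"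
  by (auto simp: Rel_def preserves_def)

lemma quot_image: "V // R = (\<lambda>v. R``{v}) ` V"
  by (auto simp: quotient_def)

lemma RelD: "(u, v) \<in> Rel V B \<Longrightarrow> \<forall>\<pi>\<in>B. preserves V \<pi> \<phi> \<Longrightarrow> \<phi> u = \<phi> v"
  unfolding Rel_def by blast

lemma fix_card:
  assumes fin: "finite V" and B: "\<And>\<pi> w. \<pi> \<in> B \<Longrightarrow> w \<in> V \<Longrightarrow> \<pi> w \<in> V"
  shows "card {\<phi> \<in> V \<rightarrow>\<^sub>E {1..k}. \<forall>\<pi>\<in>B. preserves V \<pi> \<phi>} = k ^ card (V // Rel V B)"
proof -
  let ?R = "Rel V B"
  let ?Q = "V // ?R"
  define h where "h g = restrict (\<lambda>v. g (?R``{v})) V" for g :: "'a set \<Rightarrow> nat"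
  have eq: "equiv V ?R" by (rule Rel_equiv)
  have bij: "bij_betw h (?Q \<rightarrow>\<^sub>E {1..k}) {\<phi> \<in> V \<rightarrow>\<^sub>E {1..k}. \<forall>\<pi>\<in>B. preserves V \<pi> \<phi>}"
  proof (rule bij_betw_imageI)
    show "inj_on h (?Q \<rightarrow>\<^sub>E {1..k})"
    proof (rule inj_onI)
      fix g1 g2 assume g1: "g1 \<in> ?Q \<rightarrow>\<^sub>E {1..k}" and g2: "g2 \<in> ?Q \<rightarrow>\<^sub>E {1..k}" and e: "h g1 = h g2"
      show "g1 = g2"
      proof (rule PiE_ext[OF g1 g2])
        fix X assume "X \<in> ?Q"
        then obtain v where v: "v \<in> V" "X = ?R``{v}" by (rule quotientE)
        have "h g1 v = h g2 v" using e by simp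
        then show "g1 X = g2 X" using v by (simp add: h_def)
      qed
    qed
    show "h ` (?Q \<rightarrow>\<^sub>E {1..k}) = {\<phi> \<in> V \<rightarrow>\<^sub>E {1..k}. \<forall>\<pi>\<in>B. preserves V \<pi> \<phi>}"
    proof
      show "h ` (?Q \<rightarrow>\<^sub>E {1..k}) \<subseteq> {\<phi> \<in> V \<rightarrow>\<^sub>E {1..k}. \<forall>\<pi>\<in>B. preserves V \<pi> \<phi>}"
      proof
        fix \<psi> assume "\<psi> \<in> h ` (?Q \<rightarrow>\<^sub>E {1..k})"
        then obtain g where g: "g \<in> ?Q \<rightarrow>\<^sub>E {1..k}" and psi: "\<psi> = h g" by blast
        have "h g \<in> V \<rightarrow>\<^sub>E {1..k}"
        proof (rule PiE_I)
          fix v assume v: "v \<in> V"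
          have "g (?R``{v}) \<in> {1..k}" by (rule PiE_mem[OF g quotientI[OF v]])
          then show "h g v \<in> {1..k}" using v by (simp add: h_def)
        next
          fix v assume "v \<notin> V"
          then show "h g v = undefined" by (simp add: h_def)
        qed
        moreover have "\<forall>\<pi>\<in>B. preserves V \<pi> (h g)"
        proof
          fix \<pi> assume that: "\<pi> \<in> B"
          show "preserves V \<pi> (h g)"
            unfolding preserves_def
          proof
            fix w assume w: "w \<in> V"
            have pw: "\<pi> w \<in> V" by (rule B[OF that w])
            have "(w, \<pi> w) \<in> ?R" by (rule Rel_step[OF that w pw])
            then have "?R``{w} = ?R``{\<pi> w}" using eq_equiv_class_iff[OF eq w pw] by simp
            then show "h g (\<pi> w) = h g w" using w pw by (simp add: h_def)
          qed
        qed
        ultimately show "\<psi> \<in> {\<phi> \<in> V \<rightarrow>\<^sub>E {1..k}. \<forall>\<pi>\<in>B. preserves V \<pi> \<phi>}" using psi by blast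
      qed
      show "{\<phi> \<in> V \<rightarrow>\<^sub>E {1..k}. \<forall>\<pi>\<in>B. preserves V \<pi> \<phi>} \<subseteq> h ` (?Q \<rightarrow>\<^sub>E {1..k})"
      proof
        fix \<phi> assume "\<phi> \<in> {\<phi> \<in> V \<rightarrow>\<^sub>E {1..k}. \<forall>\<pi>\<in>B. preserves V \<pi> \<phi>}"
        then have phi: "\<phi> \<in> V \<rightarrow>\<^sub>E {1..k}" and pr: "\<forall>\<pi>\<in>B. preserves V \<pi> \<phi>" by blast+
        define g where "g = restrict (\<lambda>X. \<phi> (SOME x. x \<in> X)) ?Q"
        have some: "(SOME x. x \<in> ?R``{v}) \<in> ?R``{v}" if "v \<in> V" for v
          using equiv_class_self[OF eq that] by (rule someI)
        have key: "\<phi> (SOME x. x \<in> ?R``{v}) = \<phi> v" if "v \<in> V" for v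
        proof -
          have "(v, SOME x. x \<in> ?R``{v}) \<in> ?R" using some[OF that] by (rule ImageE) simp
          then have "\<phi> v = \<phi> (SOME x. x \<in> ?R``{v})" using pr by (rule RelD)
          then show ?thesis by simp
        qed
        have "g \<in> ?Q \<rightarrow>\<^sub>E {1..k}"
        proof (rule PiE_I)
          fix X assume X: "X \<in> ?Q"
          then obtain v where v: "v \<in> V" "X = ?R``{v}" by (rule quotientE)
          have "g X = \<phi> v" using X v key[OF v(1)] by (simp add: g_def)
          then show "g X \<in> {1..k}" using PiE_mem[OF phi v(1)] by simp
        next
          fix X assume "X \<notin> ?Q"
          then show "g X = undefined" by (simp add: g_def)
        qed
        moreover have "h g = \<phi>"
        proof (rule ext)
          fix v show "h g v = \<phi> v"
          proof (cases "v \<in> V")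
            case True
            have "?R``{v} \<in> ?Q" by (rule quotientI[OF True])
            then show ?thesis using key[OF True] True by (simp add: h_def g_def)
          next
            case False
            have "\<phi> v = undefined" by (rule PiE_arb[OF phi False])
            then show ?thesis using False by (simp add: h_def)
          qed
        qed
        ultimately show "\<phi> \<in> h ` (?Q \<rightarrow>\<^sub>E {1..k})" by blast
      qed
    qed
  qed
  have "finite ?Q" using fin by (simp add: quot_image)
  then show ?thesis using bij_betw_same_card[OF bij] by (simp add: card_PiE)
qed

lemma Rel_card_le: "finite V \<Longrightarrow> card (V // Rel V B) \<le> card V"
  by (simp add: quot_image card_image_le)

lemma Rel_card_pos: "finite V \<Longrightarrow> V \<noteq> {} \<Longrightarrow> card (V // Rel V B) \<ge> 1"
  by (simp add: quot_image Suc_le_eq card_gt_0_iff)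

lemma Rel_card_lt:
  assumes fin: "finite V" and p: "\<pi> \<in> B" "w \<in> V" "\<pi> w \<in> V" "\<pi> w \<noteq> w"
  shows "card (V // Rel V B) < card V"
proof -
  have "(w, \<pi> w) \<in> Rel V B" by (rule Rel_step[OF p(1,2,3)])
  then have "Rel V B``{w} = Rel V B``{\<pi> w}" by (rule iffD2[OF eq_equiv_class_iff[OF Rel_equiv p(2,3)]])
  then have "\<not> inj_on (\<lambda>v. Rel V B``{v}) V"
  proof -
    assume e: "Rel V B``{w} = Rel V B``{\<pi> w}"
    show ?thesis
    proof
      assume "inj_on (\<lambda>v. Rel V B``{v}) V"
      then have "w = \<pi> w" using e p(2,3) by (rule inj_onD)
      then show False using p(4) by simp
    qed
  qed
  then have "card ((\<lambda>v. Rel V B``{v}) ` V) \<noteq> card V" using inj_on_iff_eq_card[OF fin] by blast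
  then have "card (V // Rel V B) \<noteq> card V" unfolding quot_image .
  then show ?thesis using Rel_card_le[OF fin, of B] by linarith
qed

lemma Rel_card_empty:
  assumes fin: "finite V"
  shows "card (V // Rel V {}) = card V"
proof -
  have "inj_on (\<lambda>v. Rel V {}``{v}) V"
  proof (rule inj_onI)
    fix u v assume uv: "u \<in> V" "v \<in> V" "Rel V {}``{u} = Rel V {}``{v}"
    have "(u, v) \<in> Rel V {}" using uv(3) by (rule iffD1[OF eq_equiv_class_iff[OF Rel_equiv uv(1,2)]])
    then have "(\<lambda>x. if x = u then 1 else (0::nat)) u = (\<lambda>x. if x = u then 1 else 0) v"
      by (rule RelD) simp
    then show "u = v" by (auto split: if_splits)
  qed
  then have "card ((\<lambda>v. Rel V {}``{v}) ` V) = card V" using inj_on_iff_eq_card[OF fin] by blast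
  then show ?thesis unfolding quot_image .
qed

lemma count_formula:
  assumes G: "simple_graph V E"
  shows "int (card (dist_labelings V E k)) =
    (\<Sum>B\<in>Pow (graph_aut V E - {id}). (-1) ^ card B * int k ^ card (V // Rel V B))"
proof -
  let ?L = "V \<rightarrow>\<^sub>E {1..k}"
  let ?A' = "graph_aut V E - {id}"
  define Gf where "Gf \<pi> = {\<phi>::'a \<Rightarrow> nat. preserves V \<pi> \<phi>}" for \<pi>
  define f where "f S = int (card (S \<inter> ?L))" for S
  have finV: "finite V" using G by (simp add: simple_graph_def)
  have finL: "finite ?L" using finV by (simp add: finite_PiE)
  have finA: "finite ?A'" using fin_aut[OF G] by simp
  have add: "f (S \<union> T) = f S + f T" if "disjnt S T" for S T
  proof -
    have "(S \<union> T) \<inter> ?L = (S \<inter> ?L) \<union> (T \<inter> ?L)" by blast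
    moreover have "(S \<inter> ?L) \<inter> (T \<inter> ?L) = {}" using that by (auto simp: disjnt_def)
    ultimately show ?thesis unfolding f_def using finL by (simp add: card_Un_disjoint)
  qed
  have IE: "f (\<Union>(Gf ` ?A')) = (\<Sum>B | B \<subseteq> ?A' \<and> B \<noteq> {}. (-1) ^ (card B + 1) * f (\<Inter>(Gf ` B)))"
    by (rule Incl_Excl_UN[OF add finA])
  have fB: "f (\<Inter>(Gf ` B)) = int k ^ card (V // Rel V B)" if "B \<subseteq> graph_aut V E" for B
  proof -
    have "\<Inter>(Gf ` B) \<inter> ?L = {\<phi> \<in> ?L. \<forall>\<pi>\<in>B. preserves V \<pi> \<phi>}" by (auto simp: Gf_def)
    moreover have "card {\<phi> \<in> ?L. \<forall>\<pi>\<in>B. preserves V \<pi> \<phi>} = k ^ card (V // Rel V B)"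
      by (rule fix_card[OF finV]) (use that aut_in[OF G] in blast)
    ultimately show ?thesis by (simp add: f_def)
  qed
  have dist: "dist_labelings V E k = ?L - \<Union>(Gf ` ?A')"
    by (auto simp: dist_labelings_def labelings_def distinguishing_def Gf_def)
  have "card ?L = card (dist_labelings V E k) + card (\<Union>(Gf ` ?A') \<inter> ?L)"
  proof -
    have "?L = dist_labelings V E k \<union> (\<Union>(Gf ` ?A') \<inter> ?L)" using dist by blast
    moreover have "dist_labelings V E k \<inter> (\<Union>(Gf ` ?A') \<inter> ?L) = {}" using dist by blast
    moreover have "finite (dist_labelings V E k)" using finL dist by simp
    moreover have "finite (\<Union>(Gf ` ?A') \<inter> ?L)" using finL by simp
    ultimately show ?thesis using card_Un_disjoint by metis
  qed
  then have c0: "int (card (dist_labelings V E k)) = f UNIV - f (\<Union>(Gf ` ?A'))"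
    by (simp add: f_def)
  have e1: "f UNIV = int k ^ card (V // Rel V {})" using fB[of "{}"] by simp
  have e2: "{B. B \<subseteq> ?A' \<and> B \<noteq> {}} = Pow ?A' - {{}}" by auto
  have IE': "f (\<Union>(Gf ` ?A')) = (\<Sum>B\<in>Pow ?A' - {{}}. (-1) ^ (card B + 1) * f (\<Inter>(Gf ` B)))"
    using IE unfolding e2 .
  have e3: "int k ^ card (V // Rel V {}) - (\<Sum>B\<in>Pow ?A' - {{}}. (-1) ^ (card B + 1) * f (\<Inter>(Gf ` B)))
     = (\<Sum>B\<in>Pow ?A'. (-1) ^ card B * int k ^ card (V // Rel V B))"
  proof -
    have "(\<Sum>B\<in>Pow ?A'. (-1) ^ card B * int k ^ card (V // Rel V B)) =
       (-1) ^ card ({}::('a\<Rightarrow>'a) set) * int k ^ card (V // Rel V {}) +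
       (\<Sum>B\<in>Pow ?A' - {{}}. (-1) ^ card B * int k ^ card (V // Rel V B))"
      using finA by (subst sum.remove[of _ "{}"]) auto
    moreover have "(\<Sum>B\<in>Pow ?A' - {{}}. (-1) ^ (card B + 1) * f (\<Inter>(Gf ` B))) =
       - (\<Sum>B\<in>Pow ?A' - {{}}. (-1) ^ card B * int k ^ card (V // Rel V B))"
    proof -
      have "(\<Sum>B\<in>Pow ?A' - {{}}. (-1) ^ (card B + 1) * f (\<Inter>(Gf ` B))) =
         (\<Sum>B\<in>Pow ?A' - {{}}. - ((-1) ^ card B * int k ^ card (V // Rel V B)))"
      proof (rule sum.cong[OF refl])
        fix B assume "B \<in> Pow ?A' - {{}}"
        then have "B \<subseteq> graph_aut V E" by auto
        then show "(-1) ^ (card B + 1) * f (\<Inter>(Gf ` B)) = - ((-1) ^ card B * int k ^ card (V // Rel V B))"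
          by (simp add: fB)
      qed
      then show ?thesis by (simp add: sum_negf)
    qed
    ultimately show ?thesis by simp
  qed
  show ?thesis using c0 e1 IE' e3 by linarith
qed

lemma D_one:
  assumes G: "simple_graph V E" and ne: "graph_aut V E \<noteq> {id}"
  shows "D V E 1 = 0"
proof -
  obtain \<pi> where pi: "\<pi> \<in> graph_aut V E" "\<pi> \<noteq> id" using ne aut_id[OF G] by blast
  have "dist_labelings V E 1 = {}"
  proof (rule ccontr)
    assume "dist_labelings V E 1 \<noteq> {}"
    then obtain \<phi> where phi: "\<phi> \<in> V \<rightarrow>\<^sub>E {1..1}" "distinguishing V E \<phi>"
      by (auto simp: dist_labelings_def labelings_def)
    have "preserves V \<pi> \<phi>" using phi(1) aut_in[OF G pi(1)] by (force simp: preserves_def)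
    then show False using phi(2) pi by (auto simp: distinguishing_def)
  qed
  then show ?thesis by (simp add: D_def)
qed

theorem theorem13:
  fixes V :: "'a set" and E :: "'a \<Rightarrow> 'a \<Rightarrow> bool"
  assumes "simple_graph V E" and "card V \<ge> 1"
  shows "\<exists>p :: rat poly.
           degree p = card V \<and> coeff p 0 = 0 \<and>
           (\<forall>k::nat. k \<ge> 1 \<longrightarrow> of_nat (D V E k) = poly p (of_nat k)) \<and>
           (graph_aut V E = {id} \<longrightarrow> (\<forall>k::nat. k \<ge> 1 \<longrightarrow> D V E k = k ^ card V)) \<and>
           (graph_aut V E \<noteq> {id} \<longrightarrow> (\<Sum>i\<le>degree p. coeff p i) = 0)"
proof -
  note G = assms(1)
  let ?n = "card V"
  let ?A' = "graph_aut V E - {id}"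
  let ?a = "card (graph_aut V E)"
  define c where "c B = card (V // Rel V B)" for B
  define Q :: "rat poly" where "Q = (\<Sum>B\<in>Pow ?A'. monom ((-1) ^ card B) (c B))"
  define p where "p = smult (1 / of_nat ?a) Q"
  have finV: "finite V" using G by (simp add: simple_graph_def)
  have Vne: "V \<noteq> {}" using assms(2) by auto
  have finA: "finite ?A'" using fin_aut[OF G] by simp
  have apos: "?a > 0" using fin_aut[OF G] aut_id[OF G] card_gt_0_iff by blast
  have c_le: "c B \<le> ?n" for B unfolding c_def by (rule Rel_card_le[OF finV])
  have c_pos: "c B \<ge> 1" for B unfolding c_def by (rule Rel_card_pos[OF finV Vne])
  have c_empty: "c {} = ?n" unfolding c_def by (rule Rel_card_empty[OF finV])
  have c_lt: "c B < ?n" if hB: "B \<in> Pow ?A'" "B \<noteq> {}" for B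
  proof -
    obtain \<pi> where pi: "\<pi> \<in> B" using hB(2) by blast
    then have pa: "\<pi> \<in> graph_aut V E" "\<pi> \<noteq> id" using hB(1) by auto
    then obtain w where w: "\<pi> w \<noteq> w" by (metis eq_id_iff)
    have wV: "w \<in> V"
    proof (rule ccontr)
      assume "w \<notin> V"
      then have "\<pi> w = w" by (rule permutes_not_in[OF aut_perm[OF G pa(1)]])
      with w show False by simp
    qed
    show ?thesis unfolding c_def
      by (rule Rel_card_lt[OF finV pi wV aut_in[OF G pa(1) wV] w])
  qed
  have coeffQ: "coeff Q i = (\<Sum>B\<in>Pow ?A'. if c B = i then (-1) ^ card B else 0)" for i
    by (simp add: Q_def coeff_sum)
  have coeffQn: "coeff Q ?n = 1"
  proof -
    have "coeff Q ?n = (\<Sum>B\<in>Pow ?A'. if c B = ?n then (-1) ^ card B else 0)" by (rule coeffQ)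
    also have "\<dots> = (if c {} = ?n then (-1) ^ card ({}::('a\<Rightarrow>'a) set) else 0) +
       (\<Sum>B\<in>Pow ?A' - {{}}. if c B = ?n then (-1) ^ card B else 0)"
      by (rule sum.remove) (simp_all add: finA fin_aut[OF G])
    also have "(\<Sum>B\<in>Pow ?A' - {{}}. if c B = ?n then (-1) ^ card B else (0::rat)) = 0"
    proof (rule sum.neutral, intro ballI)
      fix B assume "B \<in> Pow ?A' - {{}}"
      then have "c B < ?n" using c_lt by blast
      then show "(if c B = ?n then (-1) ^ card B else (0::rat)) = 0" by simp
    qed
    finally show ?thesis using c_empty by simp
  qed
  have coeffQbig: "coeff Q i = 0" if hi: "i > ?n" for i
    unfolding coeffQ
  proof (rule sum.neutral, intro ballI)
    fix B assume "B \<in> Pow ?A'"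
    have "c B \<noteq> i" using c_le[of B] hi by linarith
    then show "(if c B = i then (-1) ^ card B else (0::rat)) = 0" by simp
  qed
  have coeffQ0: "coeff Q 0 = 0"
    unfolding coeffQ
  proof (rule sum.neutral, intro ballI)
    fix B assume "B \<in> Pow ?A'"
    have "c B \<noteq> 0" using c_pos[of B] by linarith
    then show "(if c B = 0 then (-1) ^ card B else (0::rat)) = 0" by simp
  qed
  have d1: "?n \<le> degree Q" by (rule le_degree) (simp add: coeffQn)
  have d2: "degree Q \<le> ?n" by (rule degree_le) (simp add: coeffQbig)
  have degQ: "degree Q = ?n" using d1 d2 by linarith
  have degp: "degree p = ?n" using degQ apos by (simp add: p_def)
  have coeffp0: "coeff p 0 = 0" using coeffQ0 by (simp add: p_def)
  have N: "int (D V E k * ?a) = (\<Sum>B\<in>Pow ?A'. (-1) ^ card B * int k ^ c B)" for k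
  proof -
    have o: "card (dist_labelings V E k) = D V E k * ?a"
      unfolding D_def by (rule orbit_count[OF G])
    show ?thesis unfolding c_def o[symmetric] by (rule count_formula[OF G])
  qed
  have polyp: "of_nat (D V E k) = poly p (of_nat k)" for k
  proof -
    have "(of_int (int (D V E k * ?a)) :: rat) = of_int (\<Sum>B\<in>Pow ?A'. (-1) ^ card B * int k ^ c B)"
      by (rule arg_cong[OF N])
    then have e: "of_nat (D V E k) * of_nat ?a = (\<Sum>B\<in>Pow ?A'. (-1) ^ card B * (of_nat k :: rat) ^ c B)"
      by (simp add: of_int_sum)
    have q: "poly Q (of_nat k) = (\<Sum>B\<in>Pow ?A'. (-1) ^ card B * (of_nat k :: rat) ^ c B)"
      unfolding Q_def poly_sum poly_monom ..
    have "poly p (of_nat k) = poly Q (of_nat k) / of_nat ?a" by (simp add: p_def)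
    also have "\<dots> = of_nat (D V E k)" unfolding q e[symmetric] using apos by simp
    finally show ?thesis by simp
  qed
  have triv: "D V E k = k ^ ?n" if "graph_aut V E = {id}" for k
  proof -
    have A'e: "?A' = {}" using that by simp
    have a1: "?a = 1" using that by simp
    have "int (D V E k) = int k ^ c {}" using N[of k] unfolding A'e a1 by simp
    then have "int (D V E k) = int (k ^ ?n)" using c_empty by simp
    then show ?thesis by (rule injD[OF inj_of_nat])
  qed
  have sum0: "(\<Sum>i\<le>degree p. coeff p i) = 0" if "graph_aut V E \<noteq> {id}"
  proof -
    have "(\<Sum>i\<le>degree p. coeff p i) = poly p 1" by (simp add: poly_altdef)
    also have "\<dots> = of_nat (D V E 1)" using polyp[of 1] by simp
    also have "\<dots> = 0" using D_one[OF G that] by simp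
    finally show ?thesis .
  qed
  show ?thesis
    by (rule exI[of _ p]) (use degp coeffp0 polyp triv sum0 in blast)
qed

end
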